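(* The modified $\alpha$-pass algorithm cannot provide an approximation bound better than $\frac23$ for the clique inference problem with linear majority clique potentials, even when $W$ is diagonally dominant (each diagonal entry $w_{vv}$ is the largest entry of its row) and all rows of $W$ have equal sums: for every $\varepsilon>0$ there is such an instance (with nonnegative vertex potentials) on which the score of the assignment returned by modified $\alpha$-pass is at most $(\frac23+\varepsilon)$ times the optimal score.
   Context: Clique inference problem: there are $n$ vertices $1,\dots,n$, a finite set $V$ of values, real vertex potentials $\psi_{iv}$, and a clique potential $C$ depending only on the counts $n_v(\mathbf{v})=|\{i:v_i=v\}|$; the objective is $F(\mathbf{v})=\sum_i\psi_{iv_i}+C(\mathbf{v})$ over $\mathbf{v}\in V^n$. Linear majority potential: given a real $|V|\times|V|$ matrix $W=(w_{vv'})$, $C(\mathbf{v})=\sum_{v\in V}w_{av}n_v(\mathbf{v})$ where $a=\arg\max_v n_v(\mathbf{v})$ is the majority value. Modified $\alpha$-pass: for each $\alpha\in V$, sort vertices in decreasing order of $\psi_{i\alpha}+w_{\alpha\alpha}-\max_{v\ne\alpha}(\psi_{iv}+w_{\alpha v})$; for each $k\in\{1,\dots,n\}$ assign the top $k$ vertices $\alpha$ and every other vertex a value $v\neq\alpha$ maximizing $\psi_{iv}+w_{\alpha v}$; discard candidates whose majority value is not $\alpha$; output the remaining candidate with the largest $F$ over all $\alpha,k$. *)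

theory Defs
  imports Complex_Main
begin

(* Vertices are 0..<n, values are 0..<m. An assignment is x :: nat => nat with
   x i < m for i < n and (canonically) x i = 0 for i >= n. *)

definition assignments :: "nat \<Rightarrow> nat \<Rightarrow> (nat \<Rightarrow> nat) set" where
  "assignments n m = {x. (\<forall>i<n. x i < m) \<and> (\<forall>i. n \<le> i \<longrightarrow> x i = 0)}"

definition cnt :: "nat \<Rightarrow> (nat \<Rightarrow> nat) \<Rightarrow> nat \<Rightarrow> nat" where
  "cnt n x v = card {i. i < n \<and> x i = v}"

(* majority value; ties broken towards the smallest value *)
definition maj :: "nat \<Rightarrow> nat \<Rightarrow> (nat \<Rightarrow> nat) \<Rightarrow> nat" where
  "maj n m x = (LEAST v. v < m \<and> (\<forall>u<m. cnt n x u \<le> cnt n x v))"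

definition clique_pot :: "nat \<Rightarrow> nat \<Rightarrow> (nat \<Rightarrow> nat \<Rightarrow> real) \<Rightarrow> (nat \<Rightarrow> nat) \<Rightarrow> real" where
  "clique_pot n m w x = (\<Sum>v<m. w (maj n m x) v * real (cnt n x v))"

definition score :: "nat \<Rightarrow> nat \<Rightarrow> (nat \<Rightarrow> nat \<Rightarrow> real) \<Rightarrow> (nat \<Rightarrow> nat \<Rightarrow> real)
                      \<Rightarrow> (nat \<Rightarrow> nat) \<Rightarrow> real" where
  "score n m psi w x = (\<Sum>i<n. psi i (x i)) + clique_pot n m w x"

definition opt_score :: "nat \<Rightarrow> nat \<Rightarrow> (nat \<Rightarrow> nat \<Rightarrow> real) \<Rightarrow> (nat \<Rightarrow> nat \<Rightarrow> real) \<Rightarrow> real" where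
  "opt_score n m psi w = Max (score n m psi w ` assignments n m)"

(* sort key of vertex i in the alpha-pass for value a *)
definition akey :: "nat \<Rightarrow> (nat \<Rightarrow> nat \<Rightarrow> real) \<Rightarrow> (nat \<Rightarrow> nat \<Rightarrow> real) \<Rightarrow> nat \<Rightarrow> nat \<Rightarrow> real" where
  "akey m psi w a i = psi i a + w a a - Max {psi i v + w a v | v. v < m \<and> v \<noteq> a}"

(* x is a candidate produced by the modified alpha-pass for value a and prefix length k,
   for some admissible tie-breaking (sorting order sigma, choice among maximizers) *)
definition candidate :: "nat \<Rightarrow> nat \<Rightarrow> (nat \<Rightarrow> nat \<Rightarrow> real) \<Rightarrow> (nat \<Rightarrow> nat \<Rightarrow> real)
                          \<Rightarrow> nat \<Rightarrow> nat \<Rightarrow> (nat \<Rightarrow> nat) \<Rightarrow> bool" where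
  "candidate n m psi w a k x \<longleftrightarrow> a < m \<and> 1 \<le> k \<and> k \<le> n \<and>
     (\<forall>i. n \<le> i \<longrightarrow> x i = 0) \<and>
     (\<exists>\<sigma>. bij_betw \<sigma> {..<n} {..<n} \<and>
        (\<forall>i j. i < j \<and> j < n \<longrightarrow> akey m psi w a (\<sigma> j) \<le> akey m psi w a (\<sigma> i)) \<and>
        (\<forall>i<k. x (\<sigma> i) = a) \<and>
        (\<forall>i. k \<le> i \<and> i < n \<longrightarrow>
           x (\<sigma> i) < m \<and> x (\<sigma> i) \<noteq> a \<and>
           (\<forall>v<m. v \<noteq> a \<longrightarrow> psi (\<sigma> i) v + w a v \<le> psi (\<sigma> i) (x (\<sigma> i)) + w a (x (\<sigma> i)))))"

definition kept :: "nat \<Rightarrow> nat \<Rightarrow> (nat \<Rightarrow> nat \<Rightarrow> real) \<Rightarrow> (nat \<Rightarrow> nat \<Rightarrow> real)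
                     \<Rightarrow> (nat \<Rightarrow> nat) \<Rightarrow> bool" where
  "kept n m psi w x \<longleftrightarrow> (\<exists>a k. candidate n m psi w a k x \<and> maj n m x = a)"

definition alpha_pass_output :: "nat \<Rightarrow> nat \<Rightarrow> (nat \<Rightarrow> nat \<Rightarrow> real) \<Rightarrow> (nat \<Rightarrow> nat \<Rightarrow> real)
                     \<Rightarrow> (nat \<Rightarrow> nat) \<Rightarrow> bool" where
  "alpha_pass_output n m psi w x \<longleftrightarrow> kept n m psi w x \<and>
     (\<forall>y. kept n m psi w y \<longrightarrow> score n m psi w y \<le> score n m psi w x)"

end

theory Submission
  imports Defs
begin

definition psiE :: "nat \<Rightarrow> nat \<Rightarrow> real" where
  "psiE i v = (if i = 0 then 0 else if v = 1 then 3 else if v = 2 then 2 else 0)"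

definition wE :: "nat \<Rightarrow> nat \<Rightarrow> real" where
  "wE a v = (if a = 0 then (if v = 3 then -12 else 0) else -3)"

lemma card_Suc_filter:
  "card {i. i < Suc n \<and> P i} = card {i. i < n \<and> P i} + (if P n then 1 else 0)"
proof -
  have "{i. i < Suc n \<and> P i} = (if P n then insert n {i. i < n \<and> P i} else {i. i < n \<and> P i})"
    by (auto simp: less_Suc_eq)
  then show ?thesis by auto
qed

lemma cnt3: "cnt 3 x v = (if x 0 = v then 1 else 0) + (if x 1 = v then 1 else 0) + (if x 2 = v then 1 else 0)"
proof -
  have e: "(3::nat) = Suc (Suc (Suc 0))" by simp
  show ?thesis unfolding cnt_def e by (simp only: card_Suc_filter) (simp add: numeral_2_eq_2)
qed

lemma sum4: "(\<Sum>v<(4::nat). f v) = f 0 + f 1 + f 2 + (f 3 :: real)"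
  by (simp add: numeral_eq_Suc lessThan_Suc add.commute add.left_commute)

lemma sum3: "(\<Sum>i<(3::nat). f i) = f 0 + f 1 + (f 2 :: real)"
  by (simp add: numeral_eq_Suc lessThan_Suc add.commute add.left_commute)

lemma ex_max: "(0::nat) < m \<Longrightarrow> \<exists>v<m. \<forall>u<m. (f u::nat) \<le> f v"
proof (induction m)
  case 0 then show ?case by simp
next
  case (Suc m)
  show ?case
  proof (cases "m = 0")
    case True then show ?thesis by auto
  next
    case False
    then obtain v where v: "v < m" "\<forall>u<m. f u \<le> f v" using Suc by auto
    show ?thesis
    proof (cases "f m \<le> f v")
      case True then show ?thesis using v by (auto simp: less_Suc_eq)
    next
      case False then show ?thesis using v
        by (intro exI[of _ m]) (auto simp: less_Suc_eq)
    qed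
  qed
qed

lemma maj_prop: "0 < m \<Longrightarrow> maj n m x < m \<and> (\<forall>u<m. cnt n x u \<le> cnt n x (maj n m x))"
  unfolding maj_def
  by (rule LeastI_ex) (use ex_max[of m "cnt n x"] in auto)

lemma finite_assign: "finite (assignments n m)"
proof -
  have inj: "inj_on (\<lambda>x. map x [0..<n]) (assignments n m)"
  proof (rule inj_onI)
    fix x y assume x: "x \<in> assignments n m" and y: "y \<in> assignments n m"
      and e: "map x [0..<n] = map y [0..<n]"
    show "x = y"
    proof
      fix i show "x i = y i"
      proof (cases "i < n")
        case True then show ?thesis using e by (metis map_eq_conv atLeastLessThan_iff set_upt zero_le)
      next
        case False then show ?thesis using x y by (auto simp: assignments_def)
      qed
    qed
  qed
  have "(\<lambda>x. map x [0..<n]) ` assignments n m \<subseteq> {xs. set xs \<subseteq> {..<m} \<and> length xs = n}"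
    by (auto simp: assignments_def)
  moreover have "finite {xs. set xs \<subseteq> {..<m} \<and> length xs = n}"
    by (rule finite_lists_length_eq) simp
  ultimately have "finite ((\<lambda>x. map x [0..<n]) ` assignments n m)" by (rule finite_subset)
  then show ?thesis using inj finite_imageD by blast
qed

lemma cand_vals:
  assumes c: "candidate 3 4 psiE wE a k x"
  shows "\<forall>i<3. x i < 4" and "a = 0 \<Longrightarrow> x 1 \<in> {0,1} \<and> x 2 \<in> {0,1}"
proof -
  from c obtain \<sigma> where a: "a < 4" and bij: "bij_betw \<sigma> {..<3} {..<3}"
    and lo: "\<forall>i<k. x (\<sigma> i) = a"
    and hi: "\<forall>i. k \<le> i \<and> i < 3 \<longrightarrow> x (\<sigma> i) < 4 \<and> x (\<sigma> i) \<noteq> a \<and>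
           (\<forall>v<4. v \<noteq> a \<longrightarrow> psiE (\<sigma> i) v + wE a v \<le> psiE (\<sigma> i) (x (\<sigma> i)) + wE a (x (\<sigma> i)))"
    unfolding candidate_def by blast
  have pre: "\<exists>j<3. \<sigma> j = i" if "i < 3" for i
    using bij that unfolding bij_betw_def by (metis imageE lessThan_iff)
  show "\<forall>i<3. x i < 4"
  proof (intro allI impI)
    fix i assume "i < (3::nat)"
    then obtain j where j: "j < 3" "\<sigma> j = i" using pre by blast
    show "x i < 4" using lo hi j a by (cases "j < k") auto
  qed
  assume a0: "a = 0"
  have "x i \<in> {0,1}" if "i = 1 \<or> i = 2" for i
  proof -
    from that have "i < 3" by auto
    then obtain j where j: "j < 3" "\<sigma> j = i" using pre by blast
    show ?thesis
    proof (cases "j < k")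
      case True then show ?thesis using lo j a0 by auto
    next
      case False
      then have h: "x i < 4" "x i \<noteq> 0"
        "psiE i 1 + wE 0 1 \<le> psiE i (x i) + wE 0 (x i)"
        using hi j a0 by auto
      then show ?thesis using that
        by (auto simp: psiE_def wE_def split: if_splits)
    qed
  qed
  then show "x 1 \<in> {0,1} \<and> x 2 \<in> {0,1}" by auto
qed

lemma rcnt: "real (cnt 3 x v) = (if x 0 = v then 1 else 0) + (if x 1 = v then 1 else 0) + (if x 2 = v then 1 else 0)"
  by (simp add: cnt3)

lemma sum_cnt: assumes "x 0 < 4" "x 1 < 4" "x 2 < 4"
  shows "(\<Sum>v<4. real (cnt 3 x v)) = 3"
proof -
  have "(\<Sum>v<4. real (cnt 3 x v)) = (\<Sum>v<4. (if x 0 = v then 1 else 0)) + (\<Sum>v<4. (if x 1 = v then 1 else 0)) + (\<Sum>v<(4::nat). (if x 2 = v then 1 else (0::real)))"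
    by (simp only: rcnt sum.distrib)
  also have "\<dots> = 3" using assms by (simp add: sum.delta')
  finally show ?thesis .
qed

lemma kept_bound:
  assumes "kept 3 4 psiE wE x"
  shows "score 3 4 psiE wE x \<le> 3"
proof -
  from assms obtain a k where c: "candidate 3 4 psiE wE a k x" and ma: "maj 3 4 x = a"
    unfolding kept_def by blast
  have xs: "\<forall>i<3. x i < 4" using cand_vals(1)[OF c] .
  have ps: "psiE i v \<le> 3" "0 \<le> psiE i v" for i v by (auto simp: psiE_def)
  have sc: "score 3 4 psiE wE x = psiE 0 (x 0) + psiE 1 (x 1) + psiE 2 (x 2) +
       (\<Sum>v<4. wE a v * real (cnt 3 x v))"
    unfolding score_def clique_pot_def ma by (simp only: sum3)
  show ?thesis
  proof (cases "a = 0")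
    case True
    have v12: "x 1 \<in> {0,1}" "x 2 \<in> {0,1}" using cand_vals(2)[OF c True] by auto
    have mp: "cnt 3 x 1 \<le> cnt 3 x 0" using maj_prop[of 4 3 x] ma True by auto
    have nb: "\<not> (x 1 = 1 \<and> x 2 = 1)"
    proof
      assume h: "x 1 = 1 \<and> x 2 = 1"
      then have "cnt 3 x 1 \<ge> 2" "cnt 3 x 0 \<le> 1" by (simp_all add: cnt3)
      then show False using mp by linarith
    qed
    have p0: "psiE 0 (x 0) = 0" by (simp add: psiE_def)
    have "psiE 1 (x 1) + psiE 2 (x 2) \<le> 3"
      using v12 nb by (auto simp: psiE_def)
    moreover have "(\<Sum>v<4. wE a v * real (cnt 3 x v)) \<le> 0"
      using True by (simp add: sum4 wE_def)
    ultimately show ?thesis using sc p0 by linarith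
  next
    case False
    have "(\<Sum>v<4. wE a v * real (cnt 3 x v)) = -3 * (\<Sum>v<4. real (cnt 3 x v))"
      using False by (simp add: wE_def sum_distrib_left)
    also have "(\<Sum>v<4. real (cnt 3 x v)) = 3"
      using xs by (intro sum_cnt) auto
    finally have "(\<Sum>v<4. wE a v * real (cnt 3 x v)) = -9" by simp
    then show ?thesis using sc ps[of 0 "x 0"] ps[of 1 "x 1"] ps[of 2 "x 2"] by linarith
  qed
qed

lemma opt_ge: "5 \<le> opt_score 3 4 psiE wE"
proof -
  define y :: "nat \<Rightarrow> nat" where "y i = (if i = 1 then 1 else if i = 2 then 2 else 0)" for i
  have ya: "y \<in> assignments 3 4" by (auto simp: assignments_def y_def)
  have cy: "cnt 3 y v = (if v \<le> 2 then 1 else 0)" for v by (auto simp: cnt3 y_def)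
  have my: "maj 3 4 y = 0" unfolding maj_def
    by (rule Least_equality) (auto simp: cy)
  have "score 3 4 psiE wE y = 5"
    unfolding score_def clique_pot_def my
    by (simp add: sum3 sum4 cy psiE_def wE_def y_def)
  moreover have "score 3 4 psiE wE y \<le> Max (score 3 4 psiE wE ` assignments 3 4)"
    by (rule Max_ge) (use finite_assign ya in auto)
  ultimately show ?thesis unfolding opt_score_def by simp
qed

theorem theorem10:
  fixes \<epsilon> :: real
  assumes "\<epsilon> > 0"
  shows "\<exists>n m (psi :: nat \<Rightarrow> nat \<Rightarrow> real) (w :: nat \<Rightarrow> nat \<Rightarrow> real).
           1 \<le> n \<and> 2 \<le> m \<and>
           (\<forall>i<n. \<forall>v<m. 0 \<le> psi i v) \<and>
           (\<forall>v<m. \<forall>v'<m. w v v' \<le> w v v) \<and>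
           (\<exists>s. \<forall>v<m. (\<Sum>v'<m. w v v') = s) \<and>
           0 < opt_score n m psi w \<and>
           (\<forall>x. alpha_pass_output n m psi w x \<longrightarrow>
              score n m psi w x \<le> (2/3 + \<epsilon>) * opt_score n m psi w)"
proof (intro exI conjI)
  show "1 \<le> (3::nat)" "2 \<le> (4::nat)" by auto
  show "\<forall>i<3. \<forall>v<4. 0 \<le> psiE i v" by (auto simp: psiE_def)
  show "\<forall>v<4. \<forall>v'<4. wE v v' \<le> wE v v" by (auto simp: wE_def)
  show "\<forall>v<4. (\<Sum>v'<4. wE v v') = -12" by (auto simp: wE_def sum4)
  show "0 < opt_score 3 4 psiE wE" using opt_ge by linarith
  show "\<forall>x. alpha_pass_output 3 4 psiE wE x \<longrightarrow>
              score 3 4 psiE wE x \<le> (2/3 + \<epsilon>) * opt_score 3 4 psiE wE"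
  proof (intro allI impI)
    fix x assume "alpha_pass_output 3 4 psiE wE x"
    then have "score 3 4 psiE wE x \<le> 3" using kept_bound unfolding alpha_pass_output_def by blast
    moreover have "(2/3 + \<epsilon>) * 5 \<le> (2/3 + \<epsilon>) * opt_score 3 4 psiE wE"
      using opt_ge assms by (intro mult_left_mono) auto
    moreover have "3 \<le> (2/3 + \<epsilon>) * 5" using assms by (simp add: algebra_simps)
    ultimately show "score 3 4 psiE wE x \<le> (2/3 + \<epsilon>) * opt_score 3 4 psiE wE"
      by linarith
  qed
qed

end
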